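(* Let $\epsilon>0$ and let $C,D$ be symmetric positive-definite $n\times n$ matrices. Then $$\frac4\epsilon D^{1/2}\left(I+\left(I+\frac{16}{\epsilon^2}D^{1/2}CD^{1/2}\right)^{1/2}\right)^{-1}D^{1/2}=I-\frac\epsilon4C^{-1/2}\left(I+\frac4\epsilon C-\left(I+\frac{16}{\epsilon^2}C^{1/2}DC^{1/2}\right)^{1/2}\right)C^{-1/2}.$$
   Context: Square roots of symmetric positive-definite matrices are the principal (symmetric positive-definite) square roots. *)

theory Defs
  imports "HOL-Analysis.Analysis"
begin

definition sym_matrix :: "real^'n^'n \<Rightarrow> bool" where
  "sym_matrix A \<longleftrightarrow> transpose A = A"

definition pos_def :: "real^'n^'n \<Rightarrow> bool" where
  "pos_def A \<longleftrightarrow> sym_matrix A \<and> (\<forall>x. x \<noteq> 0 \<longrightarrow> x \<bullet> (A *v x) > 0)"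

definition matrix_sqrt :: "real^'n^'n \<Rightarrow> real^'n^'n" where
  "matrix_sqrt A = (THE B. pos_def B \<and> B ** B = A)"

end

theory Submission
  imports Defs
begin

lemma sym_mv: assumes "sym_matrix A" shows "(A *v x) \<bullet> y = x \<bullet> (A *v y)"
proof -
  have "A *v x = x v* A" using assms unfolding sym_matrix_def by (metis transpose_matrix_vector)
  thus ?thesis by (simp add: dot_lmul_matrix)
qed

lemma vec_eq_inner: fixes u v :: "real^'n" assumes "\<And>x. u \<bullet> x = v \<bullet> x" shows "u = v"
proof -
  have "(u - v) \<bullet> (u - v) = 0" using assms[of "u-v"] by (simp add: inner_diff_left)
  thus ?thesis by simp
qed

lemma sym_matrixI: fixes A :: "real^'n^'n"
  assumes "\<And>x y. (A *v x) \<bullet> y = x \<bullet> (A *v y)" shows "sym_matrix A"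
proof -
  have "transpose A *v y = A *v y" for y
  proof (rule vec_eq_inner)
    fix x have "(transpose A *v y) \<bullet> x = y \<bullet> (A *v x)" by (simp add: dot_lmul_matrix)
    also have "\<dots> = (A *v y) \<bullet> x" by (simp add: assms)
    finally show "(transpose A *v y) \<bullet> x = (A *v y) \<bullet> x" .
  qed
  thus ?thesis unfolding sym_matrix_def by (simp add: matrix_eq)
qed

lemma eigvec_exists:
  fixes A :: "real^'n^'n" and V :: "(real^'n) set"
  assumes symA: "sym_matrix A" and sV: "subspace V" and inv: "\<And>x. x \<in> V \<Longrightarrow> A *v x \<in> V"
    and ne: "V \<noteq> {0}"
  shows "\<exists>x\<in>V. norm x = 1 \<and> A *v x = (x \<bullet> (A *v x)) *\<^sub>R x"
proof -
  define K where "K = V \<inter> sphere 0 1"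
  define f where "f x = x \<bullet> (A *v x)" for x
  have "compact K" unfolding K_def using closed_subspace[OF sV] compact_sphere
    by (simp add: closed_Int_compact)
  obtain v where v: "v \<in> V" "v \<noteq> 0" using ne sV subspace_0 by blast
  hence "inverse (norm v) *\<^sub>R v \<in> K" unfolding K_def using sV by (simp add: subspace_scale)
  hence "K \<noteq> {}" by auto
  have "continuous_on K f" unfolding f_def
    by (intro continuous_intros continuous_on_id bounded_linear.continuous_on[OF matrix_vector_mul_bounded_linear])
  then obtain x0 where x0K: "x0 \<in> K" and x0max: "\<And>y. y \<in> K \<Longrightarrow> f y \<le> f x0"
    using continuous_attains_sup[OF \<open>compact K\<close> \<open>K \<noteq> {}\<close>] by blast
  define l where "l = f x0"
  have x0V: "x0 \<in> V" and nx0: "norm x0 = 1" using x0K unfolding K_def by auto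
  have x0x0: "x0 \<bullet> x0 = 1" by (metis power2_norm_eq_inner nx0 one_power2)
  have fscale: "f (c *\<^sub>R y) = c^2 * f y" for c y
    unfolding f_def by (simp add: matrix_vector_mult_scaleR power2_eq_square)
  have bound: "f y \<le> l * (y \<bullet> y)" if "y \<in> V" for y
  proof (cases "y = 0")
    case True then show ?thesis by (simp add: f_def)
  next
    case False
    have "inverse (norm y) *\<^sub>R y \<in> K" unfolding K_def using sV that False by (simp add: subspace_scale)
    hence "f (inverse (norm y) *\<^sub>R y) \<le> l" using x0max l_def by blast
    hence "inverse (norm y)^2 * f y \<le> l" by (simp add: fscale)
    hence "f y \<le> l * norm y ^2" using False by (simp add: field_simps)
    thus ?thesis by (simp add: power2_norm_eq_inner)
  qed
  have orth: "w \<bullet> (A *v x0) = 0" if wV: "w \<in> V" and wx: "w \<bullet> x0 = 0" for w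
  proof -
    define b where "b = w \<bullet> (A *v x0)"
    define c where "c = l * (w \<bullet> w) - f w"
    have ineq: "2 * t * b \<le> t^2 * c" for t
    proof -
      have "x0 + t *\<^sub>R w \<in> V" using sV x0V wV by (simp add: subspace_add subspace_scale)
      hence "f (x0 + t *\<^sub>R w) \<le> l * ((x0 + t *\<^sub>R w) \<bullet> (x0 + t *\<^sub>R w))" by (rule bound)
      moreover have "f (x0 + t *\<^sub>R w) = l + 2 * t * b + t^2 * f w"
        using sym_mv[OF symA, of x0 w]
        by (simp add: f_def l_def b_def algebra_simps inner_commute power2_eq_square)
      moreover have "(x0 + t *\<^sub>R w) \<bullet> (x0 + t *\<^sub>R w) = 1 + t^2 * (w \<bullet> w)"
        using x0x0 wx by (simp add: algebra_simps inner_commute power2_eq_square)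
      ultimately have "l + 2 * t * b + t^2 * f w \<le> l * (1 + t^2 * (w \<bullet> w))" by simp
      thus ?thesis by (simp add: c_def algebra_simps)
    qed
    define s where "s = \<bar>c\<bar> + 1"
    have s: "s > 0" "c < s" unfolding s_def by auto
    have "2 * (b/s) * b \<le> (b/s)^2 * c" by (rule ineq)
    hence "2 * b^2 * s \<le> b^2 * c" using s by (simp add: field_simps power2_eq_square)
    hence "b^2 * (2 * s - c) \<le> 0" by (simp add: algebra_simps)
    moreover have "2 * s - c > 0" using s by simp
    ultimately have "b^2 \<le> 0" by (simp add: mult_le_0_iff)
    thus ?thesis unfolding b_def by simp
  qed
  define w where "w = A *v x0 - l *\<^sub>R x0"
  have wV: "w \<in> V" unfolding w_def using sV inv[OF x0V] x0V by (simp add: subspace_diff subspace_scale)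
  have wx: "w \<bullet> x0 = 0" unfolding w_def l_def f_def using x0x0 by (simp add: inner_diff_left inner_diff_right inner_commute)
  have "w \<bullet> w = w \<bullet> (A *v x0) - l * (w \<bullet> x0)" unfolding w_def
    by (simp add: inner_diff_right)
  also have "\<dots> = 0" using orth[OF wV wx] wx by simp
  finally have "w = 0" by simp
  hence "A *v x0 = (x0 \<bullet> (A *v x0)) *\<^sub>R x0" unfolding w_def l_def f_def by simp
  thus ?thesis using x0V nx0 by blast
qed


definition orthonormal_eig :: "real^'n^'n \<Rightarrow> (real^'n) set \<Rightarrow> bool" where
  "orthonormal_eig A B \<longleftrightarrow> finite B \<and> (\<forall>b\<in>B. \<forall>b'\<in>B. b \<bullet> b' = (if b = b' then 1 else 0))
     \<and> (\<forall>b\<in>B. A *v b = (b \<bullet> (A *v b)) *\<^sub>R b)"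

lemma spectral_sub:
  fixes A :: "real^'n^'n"
  assumes symA: "sym_matrix A"
  shows "subspace V \<Longrightarrow> (\<forall>x\<in>V. A *v x \<in> V) \<Longrightarrow>
    \<exists>B. orthonormal_eig A B \<and> B \<subseteq> V \<and> (\<forall>v\<in>V. v = (\<Sum>b\<in>B. (b \<bullet> v) *\<^sub>R b))"
proof (induction "dim V" arbitrary: V rule: less_induct)
  case less
  show ?case
  proof (cases "V = {0}")
    case True then show ?thesis by (intro exI[of _ "{}"]) (auto simp: orthonormal_eig_def)
  next
    case False
    obtain x0 where x0: "x0 \<in> V" "norm x0 = 1" "A *v x0 = (x0 \<bullet> (A *v x0)) *\<^sub>R x0"
      using eigvec_exists[OF symA less.prems(1) _ False] less.prems(2) by blast
    define l where "l = x0 \<bullet> (A *v x0)"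
    define W where "W = {w\<in>V. w \<bullet> x0 = 0}"
    have x0x0: "x0 \<bullet> x0 = 1" by (metis power2_norm_eq_inner x0(2) one_power2)
    have x0l: "A *v x0 = l *\<^sub>R x0" unfolding l_def by (rule x0(3))
    have sW: "subspace W" using less.prems(1) unfolding W_def subspace_def
      by (auto simp: inner_add_left)
    have invW: "\<forall>x\<in>W. A *v x \<in> W"
    proof
      fix x assume "x \<in> W"
      hence "x \<in> V" "x \<bullet> x0 = 0" unfolding W_def by auto
      moreover have "(A *v x) \<bullet> x0 = x \<bullet> (A *v x0)" by (rule sym_mv[OF symA])
      moreover have "x \<bullet> (A *v x0) = l * (x \<bullet> x0)" using x0l by simp
      ultimately show "A *v x \<in> W" using less.prems(2) unfolding W_def
        by simp
    qed
    have "x0 \<notin> W" using x0x0 by (simp add: W_def)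
    hence "W \<subset> V" using x0(1) unfolding W_def by blast
    moreover have "span W = W" "span V = V" using sW less.prems(1) by (simp_all add: span_eq_iff)
    ultimately have "span W \<subset> span V" by (simp only:)
    hence "dim W < dim V" by (rule dim_psubset)
    then obtain B' where B': "orthonormal_eig A B'" "B' \<subseteq> W" "\<forall>v\<in>W. v = (\<Sum>b\<in>B'. (b \<bullet> v) *\<^sub>R b)"
      using less.hyps[OF _ sW invW] by blast
    have x0B: "x0 \<notin> B'" using B'(2) x0x0 unfolding W_def by auto
    have orthB': "b \<bullet> x0 = 0" if "b \<in> B'" for b using B'(2) that unfolding W_def by auto
    define B where "B = insert x0 B'"
    have "orthonormal_eig A B" using B'(1) x0 x0x0 orthB' x0B unfolding orthonormal_eig_def B_def
      by (auto simp: inner_commute)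
    moreover have "B \<subseteq> V" using B'(2) x0(1) unfolding B_def W_def by auto
    moreover have "\<forall>v\<in>V. v = (\<Sum>b\<in>B. (b \<bullet> v) *\<^sub>R b)"
    proof
      fix v assume vV: "v \<in> V"
      define w where "w = v - (x0 \<bullet> v) *\<^sub>R x0"
      have "w \<in> W" unfolding W_def w_def using vV x0(1) less.prems(1) x0x0
        by (simp add: subspace_diff subspace_scale inner_diff_left inner_diff_right inner_commute)
      hence "w = (\<Sum>b\<in>B'. (b \<bullet> w) *\<^sub>R b)" using B'(3) by blast
      also have "\<dots> = (\<Sum>b\<in>B'. (b \<bullet> v) *\<^sub>R b)"
        by (rule sum.cong) (auto simp: w_def inner_diff_right orthB')
      finally have "v = (x0 \<bullet> v) *\<^sub>R x0 + (\<Sum>b\<in>B'. (b \<bullet> v) *\<^sub>R b)" unfolding w_def by (simp add: algebra_simps)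
      also have "\<dots> = (\<Sum>b\<in>B. (b \<bullet> v) *\<^sub>R b)" unfolding B_def
        using B'(1) x0B by (simp add: orthonormal_eig_def)
      finally show "v = (\<Sum>b\<in>B. (b \<bullet> v) *\<^sub>R b)" .
    qed
    ultimately show ?thesis by blast
  qed
qed

lemma spectral:
  fixes A :: "real^'n^'n"
  assumes symA: "sym_matrix A"
  obtains B where "orthonormal_eig A B" "\<And>v. v = (\<Sum>b\<in>B. (b \<bullet> v) *\<^sub>R b)"
  using spectral_sub[OF symA, of UNIV] by auto

lemma ortho_inner_sum:
  assumes "orthonormal_eig A B" "b \<in> B"
  shows "b \<bullet> (\<Sum>b'\<in>B. f b' *\<^sub>R b') = f b"
proof -
  have "b \<bullet> (\<Sum>b'\<in>B. f b' *\<^sub>R b') = (\<Sum>b'\<in>B. f b' * (b \<bullet> b'))"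
    by (simp add: inner_sum_right)
  also have "\<dots> = (\<Sum>b'\<in>B. if b' = b then f b' else 0)"
    by (rule sum.cong) (use assms in \<open>auto simp: orthonormal_eig_def\<close>)
  also have "\<dots> = f b" using assms by (simp add: orthonormal_eig_def)
  finally show ?thesis .
qed

lemma ortho_norm: "orthonormal_eig A B \<Longrightarrow> b \<in> B \<Longrightarrow> b \<noteq> 0"
  unfolding orthonormal_eig_def by fastforce

lemma sqrt_exists:
  fixes A :: "real^'n^'n" assumes pdA: "pos_def A"
  shows "\<exists>S. pos_def S \<and> S ** S = A"
proof -
  have symA: "sym_matrix A" using pdA unfolding pos_def_def by auto
  obtain B where B: "orthonormal_eig A B" and exp: "\<And>v. v = (\<Sum>b\<in>B. (b \<bullet> v) *\<^sub>R b)"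
    using spectral[OF symA] by blast
  define lam where "lam b = b \<bullet> (A *v b)" for b
  have finB: "finite B" using B unfolding orthonormal_eig_def by simp
  have lampos: "lam b > 0" if "b \<in> B" for b
    using pdA ortho_norm[OF B that] unfolding lam_def pos_def_def by auto
  have labs: "\<bar>lam b\<bar> = lam b" if "b \<in> B" for b using lampos[OF that] by simp
  have eig: "A *v b = lam b *\<^sub>R b" if "b \<in> B" for b
    using B that unfolding orthonormal_eig_def lam_def by auto
  define f where "f x = (\<Sum>b\<in>B. (sqrt (lam b) * (b \<bullet> x)) *\<^sub>R b)" for x
  have lin: "linear f"
    by (rule linearI) (simp_all add: f_def inner_add_right algebra_simps sum.distrib scaleR_sum_right)
  define S where "S = matrix f"
  have Sv: "S *v x = f x" for x using matrix_vector_mul(2)[OF lin] unfolding S_def by metis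
  have inner_f: "b \<bullet> f x = sqrt (lam b) * (b \<bullet> x)" if "b \<in> B" for b x
    unfolding f_def using ortho_inner_sum[OF B that] .
  have symS: "sym_matrix S"
  proof (rule sym_matrixI)
    fix x y
    show "(S *v x) \<bullet> y = x \<bullet> (S *v y)"
      by (simp add: Sv f_def inner_sum_left inner_sum_right inner_commute mult_ac)
  qed
  have posS: "x \<bullet> (S *v x) > 0" if "x \<noteq> 0" for x
  proof -
    have eq: "x \<bullet> (S *v x) = (\<Sum>b\<in>B. sqrt (lam b) * (b \<bullet> x)^2)"
      by (simp add: Sv f_def inner_sum_right inner_commute power2_eq_square mult_ac)
    have nn: "\<forall>b\<in>B. 0 \<le> sqrt (lam b) * (b \<bullet> x)^2" 
    proof
      fix b assume "b \<in> B" hence "lam b > 0" by (rule lampos)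
      thus "0 \<le> sqrt (lam b) * (b \<bullet> x)^2" by simp
    qed
    show ?thesis
    proof (rule ccontr)
      assume "\<not> ?thesis"
      moreover have "0 \<le> (\<Sum>b\<in>B. sqrt (lam b) * (b \<bullet> x)^2)" by (rule sum_nonneg) (use nn in auto)
      ultimately have "(\<Sum>b\<in>B. sqrt (lam b) * (b \<bullet> x)^2) = 0" using eq by linarith
      hence z: "\<forall>b\<in>B. sqrt (lam b) * (b \<bullet> x)^2 = 0"
        using sum_nonneg_eq_0_iff[OF finB, of "\<lambda>b. sqrt (lam b) * (b \<bullet> x)^2"] nn by blast
      have "\<forall>b\<in>B. b \<bullet> x = 0"
      proof
        fix b assume bB: "b \<in> B"
        hence "sqrt (lam b) > 0" using lampos by simp
        moreover have "sqrt (lam b) * (b \<bullet> x)^2 = 0" using z bB by blast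
        ultimately show "b \<bullet> x = 0" by simp
      qed
      hence "(\<Sum>b\<in>B. (b \<bullet> x) *\<^sub>R b) = 0" by simp
      hence "x = 0" using exp[of x] by metis
      thus False using that by simp
    qed
  qed
  have "S ** S = A"
  proof (subst matrix_eq, intro allI)
    fix x
    have "(S ** S) *v x = f (f x)" by (simp add: Sv flip: matrix_vector_mul_assoc)
    also have "\<dots> = (\<Sum>b\<in>B. (lam b * (b \<bullet> x)) *\<^sub>R b)"
      unfolding f_def[of "f x"] by (rule sum.cong) (use labs in \<open>auto simp: inner_f\<close>)
    also have "\<dots> = A *v (\<Sum>b\<in>B. (b \<bullet> x) *\<^sub>R b)"
      by (simp add: vec.sum matrix_vector_mult_scaleR eig mult.commute)
    also have "\<dots> = A *v x" using exp[of x] by metis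
    finally show "(S ** S) *v x = A *v x" .
  qed
  thus ?thesis using symS posS unfolding pos_def_def by blast
qed


lemma transpose_add: "transpose (A + B) = transpose A + transpose (B :: 'a::semiring_1^'n^'m)"
  by (simp add: transpose_def vec_eq_iff)
lemma transpose_diff: "transpose (A - B) = transpose A - transpose (B :: 'a::ring_1^'n^'m)"
  by (simp add: transpose_def vec_eq_iff)

lemma sqrt_unique:
  fixes S1 S2 :: "real^'n^'n"
  assumes p1: "pos_def S1" and p2: "pos_def S2" and eq: "S1 ** S1 = S2 ** S2"
  shows "S1 = S2"
proof -
  define D where "D = S1 - S2"
  have s1: "sym_matrix S1" and s2: "sym_matrix S2" using p1 p2 by (auto simp: pos_def_def)
  have symD: "sym_matrix D" using s1 s2 unfolding D_def sym_matrix_def by (simp add: transpose_diff)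
  obtain B where B: "orthonormal_eig D B" and exp: "\<And>v. v = (\<Sum>b\<in>B. (b \<bullet> v) *\<^sub>R b)"
    using spectral[OF symD] by blast
  have Db: "D *v b = 0" if bB: "b \<in> B" for b
  proof -
    define d where "d = b \<bullet> (D *v b)"
    have eigb: "D *v b = d *\<^sub>R b" using B bB unfolding orthonormal_eig_def d_def by auto
    have b0: "b \<noteq> 0" by (rule ortho_norm[OF B bB])
    have key: "S1 *v (D *v b) + D *v (S2 *v b) = 0"
    proof -
      have "S1 *v (D *v b) + D *v (S2 *v b) = (S1 ** S1) *v b - (S2 ** S2) *v b"
        unfolding D_def by (simp add: matrix_vector_mult_diff_rdistrib matrix_vector_mult_diff_distrib
            flip: matrix_vector_mul_assoc)
      thus ?thesis using eq by simp
    qed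
    have "b \<bullet> (S1 *v (D *v b)) = d * (b \<bullet> (S1 *v b))" using eigb by (simp add: matrix_vector_mult_scaleR)
    moreover have "b \<bullet> (D *v (S2 *v b)) = d * (b \<bullet> (S2 *v b))"
      using sym_mv[OF symD, of b "S2 *v b"] eigb by simp
    ultimately have "d * (b \<bullet> (S1 *v b) + b \<bullet> (S2 *v b)) = 0"
      using arg_cong[OF key, of "\<lambda>v. b \<bullet> v"] by (simp add: inner_add_right algebra_simps)
    moreover have "b \<bullet> (S1 *v b) + b \<bullet> (S2 *v b) > 0" using p1 p2 b0 unfolding pos_def_def
      by (simp add: add_pos_pos)
    ultimately have "d = 0" by simp
    thus ?thesis using eigb by simp
  qed
  have Dx: "D *v x = 0" for x
  proof -
    have "D *v x = D *v (\<Sum>b\<in>B. (b \<bullet> x) *\<^sub>R b)" using exp[of x] by metis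
    also have "\<dots> = 0" by (simp add: vec.sum matrix_vector_mult_scaleR Db)
    finally show ?thesis .
  qed
  have "D = 0" by (subst matrix_eq) (simp add: Dx)
  thus ?thesis unfolding D_def by simp
qed

lemma msqrt_eq: "pos_def S \<Longrightarrow> S ** S = A \<Longrightarrow> matrix_sqrt A = S"
  unfolding matrix_sqrt_def by (rule the_equality) (auto intro: sqrt_unique)

lemma msqrt: assumes "pos_def A" shows "pos_def (matrix_sqrt A)" "matrix_sqrt A ** matrix_sqrt A = A"
  using sqrt_exists[OF assms] msqrt_eq by metis+

lemma pd_invertible: fixes A :: "real^'n^'n" assumes "pos_def A" shows "invertible A"
proof -
  have "\<forall>x. A *v x = 0 \<longrightarrow> x = 0" using assms unfolding pos_def_def by (metis inner_zero_right less_irrefl)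
  hence "\<exists>B. B ** A = mat 1" using matrix_left_invertible_ker by blast
  thus ?thesis using invertible_left_inverse by blast
qed

lemma minv: fixes A :: "real^'n^'n" assumes "invertible A"
  shows "A ** matrix_inv A = mat 1" "matrix_inv A ** A = mat 1"
  using someI_ex[OF assms[unfolded invertible_def]] unfolding matrix_inv_def by auto

lemma minv_v: fixes A :: "real^'n^'n" assumes "invertible A"
  shows "A *v (matrix_inv A *v y) = y" "matrix_inv A *v (A *v y) = y"
  using minv[OF assms] by (simp_all add: matrix_vector_mul_assoc)

lemma sym_inv: fixes A :: "real^'n^'n" assumes "sym_matrix A" "invertible A"
  shows "sym_matrix (matrix_inv A)"
proof (rule sym_matrixI)
  fix x y
  show "(matrix_inv A *v x) \<bullet> y = x \<bullet> (matrix_inv A *v y)"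
    using sym_mv[OF assms(1), of "matrix_inv A *v x" "matrix_inv A *v y"] minv_v(1)[OF assms(2)]
    by simp
qed

lemma sym_TMT: fixes T M :: "real^'n^'n" assumes "sym_matrix T" "sym_matrix M"
  shows "sym_matrix (T ** M ** T)"
  using assms unfolding sym_matrix_def by (simp add: matrix_transpose_mul matrix_mul_assoc)

lemma pd_I_plus: fixes M :: "real^'n^'n"
  assumes "sym_matrix M" "\<And>x. x \<bullet> (M *v x) \<ge> 0" "c \<ge> 0"
  shows "pos_def (mat 1 + c *\<^sub>R M)"
  unfolding pos_def_def
proof
  show "sym_matrix (mat 1 + c *\<^sub>R M)" using assms(1) unfolding sym_matrix_def
    by (simp add: transpose_add transpose_scalar)
  show "\<forall>x. x \<noteq> 0 \<longrightarrow> 0 < x \<bullet> ((mat 1 + c *\<^sub>R M) *v x)"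
  proof (intro allI impI)
    fix x :: "real^'n" assume "x \<noteq> 0"
    have "x \<bullet> ((mat 1 + c *\<^sub>R M) *v x) = x \<bullet> x + c * (x \<bullet> (M *v x))"
      by (simp add: matrix_vector_mult_add_rdistrib inner_add_right flip: scaleR_matrix_vector_assoc)
    moreover have "c * (x \<bullet> (M *v x)) \<ge> 0" using assms by simp
    moreover have "x \<bullet> x > 0" using \<open>x \<noteq> 0\<close> by simp
    ultimately show "0 < x \<bullet> ((mat 1 + c *\<^sub>R M) *v x)" by linarith
  qed
qed


lemmas mvs = matrix_vector_mult_add_rdistrib matrix_vector_mult_diff_rdistrib
  matrix_vector_right_distrib matrix_vector_mult_diff_distrib matrix_vector_mult_scaleR
  matrix_vector_mul_lid

theorem lemma1:
  fixes C D :: "real^'n^'n" and \<epsilon> :: real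
  assumes "\<epsilon> > 0" and "pos_def C" and "pos_def D"
  shows "(4 / \<epsilon>) *\<^sub>R (matrix_sqrt D ** matrix_inv (mat 1 + matrix_sqrt (mat 1 + (16 / \<epsilon>^2) *\<^sub>R (matrix_sqrt D ** C ** matrix_sqrt D))) ** matrix_sqrt D)
       = mat 1 - (\<epsilon> / 4) *\<^sub>R (matrix_inv (matrix_sqrt C) ** (mat 1 + (4 / \<epsilon>) *\<^sub>R C - matrix_sqrt (mat 1 + (16 / \<epsilon>^2) *\<^sub>R (matrix_sqrt C ** D ** matrix_sqrt C))) ** matrix_inv (matrix_sqrt C))"
proof -
  define a where "a = 4 / \<epsilon>"
  have a0: "a > 0" using assms(1) by (simp add: a_def)
  have a2: "16 / \<epsilon>^2 = a^2" by (simp add: a_def power2_eq_square)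
  have ea: "\<epsilon> / 4 = 1 / a" by (simp add: a_def)
  define S where "S = matrix_sqrt D"
  define R where "R = matrix_sqrt C"
  have pS: "pos_def S" and SS: "S ** S = D" using msqrt[OF assms(3)] by (simp_all add: S_def)
  have pR: "pos_def R" and RR: "R ** R = C" using msqrt[OF assms(2)] by (simp_all add: R_def)
  have sS: "sym_matrix S" and sR: "sym_matrix R" and sC: "sym_matrix C" and sD: "sym_matrix D"
    using pS pR assms unfolding pos_def_def by auto
  have SSv: "S *v (S *v x) = D *v x" for x using SS by (simp add: matrix_vector_mul_assoc)
  have RRv: "R *v (R *v x) = C *v x" for x using RR by (simp add: matrix_vector_mul_assoc)
  have psdC: "x \<bullet> (C *v x) \<ge> 0" for x using assms(2) unfolding pos_def_def
    by (cases "x = 0") (auto intro: less_imp_le)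
  define M1 where "M1 = mat 1 + a^2 *\<^sub>R (S ** C ** S)"
  have pM1: "pos_def M1" unfolding M1_def
  proof (rule pd_I_plus)
    show "sym_matrix (S ** C ** S)" using sS sC by (rule sym_TMT)
    fix x show "x \<bullet> ((S ** C ** S) *v x) \<ge> 0"
      using psdC[of "S *v x"] sym_mv[OF sS, of x "C *v (S *v x)"]
      by (simp flip: matrix_vector_mul_assoc)
  qed simp
  define P where "P = matrix_sqrt M1"
  have pP: "pos_def P" and PP: "P ** P = M1" using msqrt[OF pM1] by (simp_all add: P_def)
  have sP: "sym_matrix P" using pP unfolding pos_def_def by auto
  have PPv: "P *v (P *v x) = x + a^2 *\<^sub>R (S *v (C *v (S *v x)))" for x
  proof -
    have "P *v (P *v x) = M1 *v x" using PP by (simp add: matrix_vector_mul_assoc)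
    thus ?thesis unfolding M1_def by (simp add: mvs flip: scaleR_matrix_vector_assoc matrix_vector_mul_assoc)
  qed
  define N where "N = mat 1 + P"
  have pN: "pos_def N" unfolding N_def pos_def_def
  proof
    show "sym_matrix (mat 1 + P)" using sP unfolding sym_matrix_def by (simp add: transpose_add)
    show "\<forall>x. x \<noteq> 0 \<longrightarrow> 0 < x \<bullet> ((mat 1 + P) *v x)"
      using pP unfolding pos_def_def by (auto simp: mvs inner_add_right intro: add_pos_pos)
  qed
  have Nv: "N *v x = x + P *v x" for x unfolding N_def by (simp add: mvs)
  have iN: "invertible N" by (rule pd_invertible[OF pN])
  define K where "K = matrix_inv N"
  have KN: "K *v (N *v y) = y" and NK: "N *v (K *v y) = y" for y
    using minv_v[OF iN] by (simp_all add: K_def)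
  have sK: "sym_matrix K" unfolding K_def
    by (rule sym_inv[OF _ iN]) (use pN in \<open>simp add: pos_def_def\<close>)
  have psdK: "z \<bullet> (K *v z) \<ge> 0" for z
  proof -
    define u where "u = K *v z"
    have "z = N *v u" unfolding u_def by (simp add: NK)
    hence "z \<bullet> (K *v z) = (N *v u) \<bullet> u" by (simp add: u_def)
    also have "\<dots> = u \<bullet> (N *v u)" by (simp add: inner_commute)
    also have "\<dots> \<ge> 0" using pN unfolding pos_def_def by (cases "u = 0") (auto intro: less_imp_le)
    finally show ?thesis .
  qed
  define Q where "Q = mat 1 + a^2 *\<^sub>R (R ** (S ** K ** S) ** R)"
  have Qv: "Q *v x = x + a^2 *\<^sub>R (R *v (S *v (K *v (S *v (R *v x)))))" for x
    unfolding Q_def by (simp add: mvs flip: scaleR_matrix_vector_assoc matrix_vector_mul_assoc)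
  have pQ: "pos_def Q" unfolding Q_def
  proof (rule pd_I_plus)
    show "sym_matrix (R ** (S ** K ** S) ** R)" using sR sym_TMT[OF sS sK] by (rule sym_TMT)
    fix x
    have "x \<bullet> ((R ** (S ** K ** S) ** R) *v x) = (S *v (R *v x)) \<bullet> (K *v (S *v (R *v x)))"
      using sym_mv[OF sR, of x "S *v (K *v (S *v (R *v x)))"]
        sym_mv[OF sS, of "R *v x" "K *v (S *v (R *v x))"]
      by (simp flip: matrix_vector_mul_assoc)
    thus "x \<bullet> ((R ** (S ** K ** S) ** R) *v x) \<ge> 0" using psdK by simp
  qed simp
  define M2 where "M2 = mat 1 + a^2 *\<^sub>R (R ** D ** R)"
  have QQ: "Q ** Q = M2"
  proof (subst matrix_eq, intro allI)
    fix x
    define w where "w = K *v (S *v (R *v x))"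
    have Q1: "Q *v x = x + a^2 *\<^sub>R (R *v (S *v w))" by (simp add: Qv w_def)
    have "S *v (R *v (Q *v x)) = S *v (R *v x) + a^2 *\<^sub>R (S *v (C *v (S *v w)))"
      by (simp add: Q1 mvs RRv)
    also have "\<dots> = S *v (R *v x) + (P *v (P *v w) - w)" by (simp add: PPv)
    finally have e1: "S *v (R *v (Q *v x)) = S *v (R *v x) + (P *v (P *v w) - w)" .
    have "P *v (P *v w) - w = N *v (P *v w - w)" by (simp add: Nv mvs)
    hence "K *v (S *v (R *v (Q *v x))) = w + (P *v w - w)"
      by (simp add: e1 mvs KN w_def)
    hence e2: "K *v (S *v (R *v (Q *v x))) = P *v w" by simp
    have "Q *v (Q *v x) = Q *v x + a^2 *\<^sub>R (R *v (S *v (P *v w)))" by (simp add: Qv[of "Q *v x"] e2)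
    also have "\<dots> = x + a^2 *\<^sub>R (R *v (S *v (N *v w)))" by (simp add: Q1 Nv mvs algebra_simps)
    also have "\<dots> = x + a^2 *\<^sub>R (R *v (S *v (S *v (R *v x))))" by (simp add: w_def NK)
    also have "\<dots> = M2 *v x" unfolding M2_def
      by (simp add: mvs SSv flip: scaleR_matrix_vector_assoc matrix_vector_mul_assoc)
    finally show "(Q ** Q) *v x = M2 *v x" by (simp flip: matrix_vector_mul_assoc)
  qed
  have Qeq: "matrix_sqrt M2 = Q" by (rule msqrt_eq[OF pQ QQ])
  have iR: "invertible R" by (rule pd_invertible[OF pR])
  define Ri where "Ri = matrix_inv R"
  have RiR: "Ri *v (R *v y) = y" and RRi: "R *v (Ri *v y) = y" for y
    using minv_v[OF iR] by (simp_all add: Ri_def)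
  have "a *\<^sub>R (S ** K ** S) = mat 1 - (1 / a) *\<^sub>R (Ri ** (mat 1 + a *\<^sub>R C - Q) ** Ri)"
  proof (subst matrix_eq, intro allI)
    fix x
    define y where "y = Ri *v x"
    have Ry: "R *v y = x" by (simp add: y_def RRi)
    have Cy: "C *v y = R *v x" using RRv[of y] Ry by simp
    have "(mat 1 + a *\<^sub>R C - Q) *v y = a *\<^sub>R (R *v x) - a^2 *\<^sub>R (R *v (S *v (K *v (S *v x))))"
      using Cy by (simp add: mvs Qv Ry flip: scaleR_matrix_vector_assoc)
    hence "(Ri ** (mat 1 + a *\<^sub>R C - Q) ** Ri) *v x = a *\<^sub>R x - a^2 *\<^sub>R (S *v (K *v (S *v x)))"
      by (simp add: mvs RiR y_def flip: matrix_vector_mul_assoc)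
    hence "(mat 1 - (1 / a) *\<^sub>R (Ri ** (mat 1 + a *\<^sub>R C - Q) ** Ri)) *v x = a *\<^sub>R (S *v (K *v (S *v x)))"
      using a0 by (simp add: mvs power2_eq_square scaleR_diff_right flip: scaleR_matrix_vector_assoc)
    thus "(a *\<^sub>R (S ** K ** S)) *v x = (mat 1 - (1 / a) *\<^sub>R (Ri ** (mat 1 + a *\<^sub>R C - Q) ** Ri)) *v x"
      by (simp flip: scaleR_matrix_vector_assoc matrix_vector_mul_assoc)
  qed
  thus ?thesis
    unfolding a2 ea a_def[symmetric] M1_def[symmetric] P_def[symmetric] N_def[symmetric]
      K_def[symmetric] S_def[symmetric] R_def[symmetric] Ri_def[symmetric] M2_def[symmetric]
    by (simp add: Qeq)
qed

end
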